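(* Let $x=(x_1,\ldots,x_n)\in[\ell]^n$ be a minimal non-crossing sequence in which exactly $\ell$ distinct values occur. Then $n\le 4\ell$.
   Context: A sequence $x\in[\ell]^n$ is non-crossing if for all $1\le i<j<k<l\le n$ we have $x_i\ne x_k$, or $x_j\ne x_l$, or $x_i=x_j=x_k=x_l$. It is minimal if there is no index $i$ with $x_i=x_{i+1}=x_{i+2}$. Here $[\ell]=\{1,\ldots,\ell\}$. *)

theory Defs
  imports Main
begin

text \<open>Sequences x in [l]^n are lists of length n with entries in {1..l};
  index i of the paper corresponds to list position i-1.\<close>

definition non_crossing :: "nat list \<Rightarrow> bool" where
  "non_crossing x \<longleftrightarrow>
     (\<forall>i j k l. i < j \<and> j < k \<and> k < l \<and> l < length x \<longrightarrow>
        x ! i \<noteq> x ! k \<or> x ! j \<noteq> x ! l \<or>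
        (x ! i = x ! j \<and> x ! j = x ! k \<and> x ! k = x ! l))"

definition minimal_seq :: "nat list \<Rightarrow> bool" where
  "minimal_seq x \<longleftrightarrow>
     \<not> (\<exists>i. i + 2 < length x \<and> x ! i = x ! (i + 1) \<and> x ! (i + 1) = x ! (i + 2))"

end

theory Submission
  imports Defs
begin

lemma nc_app1: assumes "non_crossing (xs @ ys)" shows "non_crossing xs"
  unfolding non_crossing_def
proof (intro allI impI)
  fix i j k l assume h: "i < j \<and> j < k \<and> k < l \<and> l < length xs"
  with assms[unfolded non_crossing_def, rule_format, of i j k l]
  show "xs ! i \<noteq> xs ! k \<or> xs ! j \<noteq> xs ! l \<or> (xs ! i = xs ! j \<and> xs ! j = xs ! k \<and> xs ! k = xs ! l)"
    by (auto simp: nth_append)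
qed

lemma nc_app2: assumes "non_crossing (xs @ ys)" shows "non_crossing ys"
  unfolding non_crossing_def
proof (intro allI impI)
  fix i j k l assume h: "i < j \<and> j < k \<and> k < l \<and> l < length ys"
  with assms[unfolded non_crossing_def, rule_format, of "length xs + i" "length xs + j" "length xs + k" "length xs + l"]
  show "ys ! i \<noteq> ys ! k \<or> ys ! j \<noteq> ys ! l \<or> (ys ! i = ys ! j \<and> ys ! j = ys ! k \<and> ys ! k = ys ! l)"
    by (auto simp: nth_append_length_plus)
qed

lemma min_app1: assumes "minimal_seq (xs @ ys)" shows "minimal_seq xs"
  unfolding minimal_seq_def
proof (rule notI, elim exE conjE)
  fix i assume b: "i + 2 < length xs" "xs ! i = xs ! (i+1)" "xs!(i+1) = xs!(i+2)"
  then have "i+2 < length (xs@ys) \<and> (xs@ys)!i = (xs@ys)!(i+1) \<and> (xs@ys)!(i+1) = (xs@ys)!(i+2)"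
    by (simp add: nth_append)
  with assms show False unfolding minimal_seq_def by blast
qed

lemma min_app2: assumes "minimal_seq (xs @ ys)" shows "minimal_seq ys"
  unfolding minimal_seq_def
proof (rule notI, elim exE conjE)
  fix i assume b: "i + 2 < length ys" "ys ! i = ys ! (i+1)" "ys!(i+1) = ys!(i+2)"
  then have "length xs + i+2 < length (xs@ys) \<and> (xs@ys)!(length xs + i) = (xs@ys)!(length xs + i+1) \<and> (xs@ys)!(length xs + i+1) = (xs@ys)!(length xs + i+2)"
    by (simp add: nth_append)
  with assms show False unfolding minimal_seq_def by blast
qed

lemma main:
  "x \<noteq> [] \<Longrightarrow> non_crossing x \<Longrightarrow> minimal_seq x \<Longrightarrow>
   length x + 2 + (if length x \<ge> 2 \<and> x!0 = x!1 then 0 else 1) \<le> 4 * card (set x)"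
proof (induction "length x" arbitrary: x rule: less_induct)
  case less
  obtain a r where x: "x = a # r" using less.prems(1) by (cases x) auto
  define u where "u = takeWhile (\<lambda>y. y \<noteq> a) r"
  define v where "v = dropWhile (\<lambda>y. y \<noteq> a) r"
  have r: "r = u @ v" unfolding u_def v_def by simp
  have x2: "x = [a] @ u @ v" using x r by simp
  have au: "a \<notin> set u" unfolding u_def by (auto dest: set_takeWhileD)
  have ncu: "non_crossing u" and ncv: "non_crossing v"
    using less.prems(2) x2 by (metis nc_app1 nc_app2)+
  have mu: "minimal_seq u" and mv: "minimal_seq v"
    using less.prems(3) x2 by (metis min_app1 min_app2)+
  have IH: "\<And>y. length y < length x \<Longrightarrow> y \<noteq> [] \<Longrightarrow> non_crossing y \<Longrightarrow> minimal_seq y \<Longrightarrow>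
     length y + 2 + (if length y \<ge> 2 \<and> y!0 = y!1 then 0 else 1) \<le> 4 * card (set y)"
    using less.hyps by blast
  show ?case
  proof (cases "u = []")
    case False
    have hu: "u ! 0 \<noteq> a" using False au by (metis nth_mem length_greater_0_conv)
    have s: "\<not> (length x \<ge> 2 \<and> x!0 = x!1)" using x2 False hu by (auto simp: nth_append)
    have IHu: "length u + 2 \<le> 4 * card (set u)"
      using IH[of u] False ncu mu x2 by (auto split: if_splits)
    show ?thesis
    proof (cases "v = []")
      case True
      have "card (set x) = Suc (card (set u))" using x2 True au by simp
      then show ?thesis using s IHu x2 True by simp
    next
      case vne: False
      obtain v' where v: "v = a # v'"
        using vne unfolding v_def
        by (metis (mono_tags, lifting) dropWhile_eq_Nil_conv hd_dropWhile list.collapse)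
      have IHv: "length v + 2 \<le> 4 * card (set v)"
        using IH[of v] vne ncv mv x2 False by (auto split: if_splits)
      have disj: "set u \<inter> set v = {}"
      proof (rule ccontr)
        assume "set u \<inter> set v \<noteq> {}"
        then obtain b where b: "b \<in> set u" "b \<in> set v'" using v au by auto
        obtain i where i: "i < length u" "u ! i = b" using b(1) by (meson in_set_conv_nth)
        obtain j where j: "j < length v'" "v' ! j = b" using b(2) by (meson in_set_conv_nth)
        have ab: "a \<noteq> b" using au b by auto
        have xx: "x = a # u @ a # v'" using x2 v by simp
        have "x ! 0 = a" using xx by simp
        moreover have "x ! (1 + i) = b" using xx i by (simp add: nth_append)
        moreover have "x ! (1 + length u) = a" using xx by (simp add: nth_append)
        moreover have "x ! (2 + length u + j) = b" using xx j by (simp add: nth_append)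
        moreover have "2 + length u + j < length x" using xx j by simp
        ultimately show False
          using less.prems(2)[unfolded non_crossing_def, rule_format, of 0 "1+i" "1 + length u" "2 + length u + j"]
            i ab by auto
      qed
      have "set x = set u \<union> set v" using x2 v by auto
      hence "card (set x) = card (set u) + card (set v)" using disj by (simp add: card_Un_disjoint)
      then show ?thesis using s IHu IHv x2 by simp
    qed
  next
    case True
    show ?thesis
    proof (cases "v = []")
      case True
      then show ?thesis using x2 \<open>u = []\<close> by simp
    next
      case vne: False
      obtain v' where v: "v = a # v'"
        using vne unfolding v_def
        by (metis (mono_tags, lifting) dropWhile_eq_Nil_conv hd_dropWhile list.collapse)
      have xx: "x = a # a # v'" using x2 v True by simp
      have sv: "\<not> (length v \<ge> 2 \<and> v!0 = v!1)"
      proof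
        assume "length v \<ge> 2 \<and> v!0 = v!1"
        then have "0 + 2 < length x \<and> x!0 = x!(0+1) \<and> x!(0+1) = x!(0+2)"
          using xx v by (cases v') auto
        then show False using less.prems(3) unfolding minimal_seq_def by blast
      qed
      have IHv: "length v + 3 \<le> 4 * card (set v)"
        using IH[of v] vne ncv mv xx v sv by auto
      have "set x = set v" using xx v by auto
      then show ?thesis using IHv xx v by simp
    qed
  qed
qed

theorem lemma3p3:
  fixes x :: "nat list" and L :: nat
  assumes "set x \<subseteq> {1..L}"
    and "non_crossing x"
    and "minimal_seq x"
    and "card (set x) = L"
  shows "length x \<le> 4 * L"
proof (cases "x = []")
  case True then show ?thesis by simp
next
  case False
  from main[OF False assms(2,3)] assms(4) show ?thesis by (auto split: if_splits)
qed

end
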